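(* Let $P$ be a poset, let $\iota:\mathbf{JF}^+_P\to\mathbf{JF}_P$ be the inclusion, let $F_P$ send a frame-generating join-specification $\mathcal{U}$ to $\eta:P\to\mathcal{I}_{\mathcal{U}}$, $p\mapsto p^\downarrow$ (and an inclusion $\mathcal{U}_1\subseteq\mathcal{U}_2$ to the unique frame morphism $\mathcal{I}_{\mathcal{U}_1}\to\mathcal{I}_{\mathcal{U}_2}$ with $p^\downarrow\mapsto p^\downarrow$), let $G_P:\mathbf{JC}_P\to\mathbf{JF}^+_P$ send $e$ to $(\mathcal{U}_e)^-$ (arrows to inclusions), and let $G'_P:\mathbf{Frm}_P\to\mathbf{JF}^+_P$ be the restriction of $G_P$ to $\mathbf{Frm}_P$. Then $F_P\circ\iota\dashv G_P$ (with $F_P\circ\iota$ regarded as a functor $\mathbf{JF}^+_P\to\mathbf{JC}_P$), $F_P\dashv G'_P$ (with $F_P:\mathbf{JF}_P\to\mathbf{Frm}_P$ and $G'_P$ regarded as a functor into $\mathbf{JF}_P$), and $F_P\circ\iota\dashv G'_P$ (with $F_P\circ\iota:\mathbf{JF}^+_P\to\mathbf{Frm}_P$).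
   Context: A join-specification for $P$ is a set $\mathcal{U}\subseteq\wp(P)$ such that $\bigvee S$ exists in $P$ for every $S\in\mathcal{U}$ and $\{p\}\in\mathcal{U}$ for every $p\in P$. A $\mathcal{U}$-ideal is a down-closed $C$ with $\bigvee S\in C$ whenever $S\in\mathcal{U}$, $S\subseteq C$; $\mathcal{I}_{\mathcal{U}}$ is the complete lattice of $\mathcal{U}$-ideals; $\Gamma_{\mathcal{U}}(S)$ is the smallest $\mathcal{U}$-ideal containing $S$; $\mathcal{U}^+=\{S:\bigvee S\text{ exists and }\bigvee S\in\Gamma_{\mathcal{U}}(S)\}$; $\mathcal{U}$ is maximal if $\mathcal{U}=\mathcal{U}^+$ and frame-generating if $\mathcal{I}_{\mathcal{U}}$ is a frame. $\mathbf{JF}_P$ (resp. $\mathbf{JF}^+_P$) is the thin category of frame-generating (resp. maximal frame-generating) join-specifications ordered by inclusion. A join-completion of $P$ is an order embedding $e:P\to L$ into a complete lattice with every element of $L$ a join of elements of $e[P]$. $\mathbf{JC}_P$ has join-completions as objects and, as arrows $e_1\to e_2$, completely join-preserving $f:L_1\to L_2$ with $f\circ e_1=e_2$. $\mathbf{Frm}_P$ has as objects join-completions $e:P\to L$ with $L$ a frame, and as arrows $e_1\to e_2$ frame morphisms (lattice homomorphisms preserving arbitrary joins) $f:L_1\to L_2$ with $f\circ e_1=e_2$. For a join-completion $e$, $\mathcal{U}_e=\{S\subseteq P:\bigvee S\text{ exists and }e(\bigvee S)=\bigvee e[S]\}$, and for a join-specification $\mathcal{V}$, $\mathcal{V}^-$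 is the largest frame-generating join-specification contained in $\mathcal{V}$ (which exists and, for $\mathcal{V}=\mathcal{U}_e$, is maximal). *)

theory Defs
  imports Main
begin

text \<open>A poset is a carrier set P inside a type of class order (with the induced order);
  a complete lattice L likewise is a carrier set with the induced order.\<close>

definition is_lub_in :: "'a::order set \<Rightarrow> 'a set \<Rightarrow> 'a \<Rightarrow> bool" where
  "is_lub_in P S x \<longleftrightarrow> x \<in> P \<and> (\<forall>s\<in>S. s \<le> x) \<and> (\<forall>y\<in>P. (\<forall>s\<in>S. s \<le> y) \<longrightarrow> x \<le> y)"

definition is_glb_in :: "'a::order set \<Rightarrow> 'a set \<Rightarrow> 'a \<Rightarrow> bool" where
  "is_glb_in P S x \<longleftrightarrow> x \<in> P \<and> (\<forall>s\<in>S. x \<le> s) \<and> (\<forall>y\<in>P. (\<forall>s\<in>S. y \<le> s) \<longrightarrow> y \<le> x)"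

definition has_join :: "'a::order set \<Rightarrow> 'a set \<Rightarrow> bool" where
  "has_join P S \<longleftrightarrow> (\<exists>x. is_lub_in P S x)"

definition join_in :: "'a::order set \<Rightarrow> 'a set \<Rightarrow> 'a" where
  "join_in P S = (THE x. is_lub_in P S x)"

definition meet_in :: "'a::order set \<Rightarrow> 'a set \<Rightarrow> 'a" where
  "meet_in P S = (THE x. is_glb_in P S x)"

definition complete_on :: "'a::order set \<Rightarrow> bool" where
  "complete_on L \<longleftrightarrow> (\<forall>A. A \<subseteq> L \<longrightarrow> has_join L A)"

definition frame_on :: "'a::order set \<Rightarrow> bool" where
  "frame_on L \<longleftrightarrow> complete_on L \<and>
     (\<forall>a\<in>L. \<forall>A. A \<subseteq> L \<longrightarrow>
        meet_in L {a, join_in L A} = join_in L ((\<lambda>b. meet_in L {a, b}) ` A))"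

definition join_spec :: "'a::order set \<Rightarrow> 'a set set \<Rightarrow> bool" where
  "join_spec P U \<longleftrightarrow> U \<subseteq> Pow P \<and> (\<forall>S\<in>U. has_join P S) \<and> (\<forall>p\<in>P. {p} \<in> U)"

definition U_ideal :: "'a::order set \<Rightarrow> 'a set set \<Rightarrow> 'a set \<Rightarrow> bool" where
  "U_ideal P U C \<longleftrightarrow> C \<subseteq> P \<and> (\<forall>x\<in>C. \<forall>y\<in>P. y \<le> x \<longrightarrow> y \<in> C)
     \<and> (\<forall>S\<in>U. S \<subseteq> C \<longrightarrow> join_in P S \<in> C)"

definition ideals :: "'a::order set \<Rightarrow> 'a set set \<Rightarrow> 'a set set" where
  "ideals P U = {C. U_ideal P U C}"

definition Gamma :: "'a::order set \<Rightarrow> 'a set set \<Rightarrow> 'a set \<Rightarrow> 'a set" where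
  "Gamma P U S = \<Inter>{C \<in> ideals P U. S \<subseteq> C}"

definition Uplus :: "'a::order set \<Rightarrow> 'a set set \<Rightarrow> 'a set set" where
  "Uplus P U = {S. S \<subseteq> P \<and> has_join P S \<and> join_in P S \<in> Gamma P U S}"

definition maximal_spec :: "'a::order set \<Rightarrow> 'a set set \<Rightarrow> bool" where
  "maximal_spec P U \<longleftrightarrow> U = Uplus P U"

definition frame_generating :: "'a::order set \<Rightarrow> 'a set set \<Rightarrow> bool" where
  "frame_generating P U \<longleftrightarrow> join_spec P U \<and> frame_on (ideals P U)"

text \<open>The largest frame-generating join-specification contained in V (the union of all
  frame-generating ones contained in V, which is the largest one whenever one exists).\<close>
definition Vminus :: "'a::order set \<Rightarrow> 'a set set \<Rightarrow> 'a set set" where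
  "Vminus P V = \<Union>{W. frame_generating P W \<and> W \<subseteq> V}"

definition join_completion :: "'a::order set \<Rightarrow> 'l::order set \<Rightarrow> ('a \<Rightarrow> 'l) \<Rightarrow> bool" where
  "join_completion P L e \<longleftrightarrow> complete_on L \<and> e ` P \<subseteq> L
     \<and> (\<forall>x\<in>P. \<forall>y\<in>P. x \<le> y \<longleftrightarrow> e x \<le> e y)
     \<and> (\<forall>x\<in>L. \<exists>A. A \<subseteq> P \<and> x = join_in L (e ` A))"

definition jc_arrow :: "'a::order set \<Rightarrow> 'l::order set \<Rightarrow> ('a \<Rightarrow> 'l)
     \<Rightarrow> 'm::order set \<Rightarrow> ('a \<Rightarrow> 'm) \<Rightarrow> ('l \<Rightarrow> 'm) \<Rightarrow> bool" where
  "jc_arrow P L1 e1 L2 e2 f \<longleftrightarrow> f ` L1 \<subseteq> L2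
     \<and> (\<forall>A. A \<subseteq> L1 \<longrightarrow> f (join_in L1 A) = join_in L2 (f ` A))
     \<and> (\<forall>p\<in>P. f (e1 p) = e2 p)"

definition frm_arrow :: "'a::order set \<Rightarrow> 'l::order set \<Rightarrow> ('a \<Rightarrow> 'l)
     \<Rightarrow> 'm::order set \<Rightarrow> ('a \<Rightarrow> 'm) \<Rightarrow> ('l \<Rightarrow> 'm) \<Rightarrow> bool" where
  "frm_arrow P L1 e1 L2 e2 f \<longleftrightarrow> jc_arrow P L1 e1 L2 e2 f
     \<and> (\<forall>a\<in>L1. \<forall>b\<in>L1. f (meet_in L1 {a, b}) = meet_in L2 {f a, f b})"

definition U_of :: "'a::order set \<Rightarrow> 'l::order set \<Rightarrow> ('a \<Rightarrow> 'l) \<Rightarrow> 'a set set" where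
  "U_of P L e = {S. S \<subseteq> P \<and> has_join P S \<and> e (join_in P S) = join_in L (e ` S)}"

definition eta :: "'a::order set \<Rightarrow> 'a \<Rightarrow> 'a set" where
  "eta P p = {q \<in> P. q \<le> p}"

definition G_obj :: "'a::order set \<Rightarrow> 'l::order set \<Rightarrow> ('a \<Rightarrow> 'l) \<Rightarrow> 'a set set" where
  "G_obj P L e = Vminus P (U_of P L e)"

end

theory Submission
  imports Defs
begin



lemma lub_unique: "is_lub_in P S x \<Longrightarrow> is_lub_in P S y \<Longrightarrow> x = y"
  unfolding is_lub_in_def by (meson order_antisym)

lemma join_in_eq: "is_lub_in P S x \<Longrightarrow> join_in P S = x"
  unfolding join_in_def using lub_unique by blast

lemma join_in_lub: "has_join P S \<Longrightarrow> is_lub_in P S (join_in P S)"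
  unfolding has_join_def using join_in_eq by metis

lemma glb_unique: "is_glb_in P S x \<Longrightarrow> is_glb_in P S y \<Longrightarrow> x = y"
  unfolding is_glb_in_def by (meson order_antisym)

lemma meet_in_eq: "is_glb_in P S x \<Longrightarrow> meet_in P S = x"
  unfolding meet_in_def using glb_unique by blast

lemma cl_lub: "complete_on L \<Longrightarrow> A \<subseteq> L \<Longrightarrow> is_lub_in L A (join_in L A)"
  unfolding complete_on_def using join_in_lub by blast

lemma cl_mem: "complete_on L \<Longrightarrow> A \<subseteq> L \<Longrightarrow> join_in L A \<in> L"
  using cl_lub unfolding is_lub_in_def by blast

lemma cl_upper: "complete_on L \<Longrightarrow> A \<subseteq> L \<Longrightarrow> a \<in> A \<Longrightarrow> a \<le> join_in L A"
  using cl_lub unfolding is_lub_in_def by blast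

lemma cl_least: "complete_on L \<Longrightarrow> A \<subseteq> L \<Longrightarrow> y \<in> L \<Longrightarrow> (\<And>a. a \<in> A \<Longrightarrow> a \<le> y) \<Longrightarrow> join_in L A \<le> y"
  using cl_lub unfolding is_lub_in_def by blast

lemma cl_mono: "complete_on L \<Longrightarrow> A \<subseteq> B \<Longrightarrow> B \<subseteq> L \<Longrightarrow> join_in L A \<le> join_in L B"
  by (meson cl_least cl_mem cl_upper subsetD subset_trans)

lemma cl_glb: "complete_on L \<Longrightarrow> x \<in> L \<Longrightarrow> y \<in> L \<Longrightarrow> is_glb_in L {x,y} (meet_in L {x,y})"
proof -
  assume c: "complete_on L" and xy: "x \<in> L" "y \<in> L"
  let ?B = "{z\<in>L. z \<le> x \<and> z \<le> y}"
  have "is_glb_in L {x,y} (join_in L ?B)"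
    unfolding is_glb_in_def using c xy
    by (auto intro!: cl_mem cl_least cl_upper)
  then show ?thesis using meet_in_eq by metis
qed

lemma cl_meet_mem: "complete_on L \<Longrightarrow> x \<in> L \<Longrightarrow> y \<in> L \<Longrightarrow> meet_in L {x,y} \<in> L"
  using cl_glb unfolding is_glb_in_def by blast
lemma cl_meet_le1: "complete_on L \<Longrightarrow> x \<in> L \<Longrightarrow> y \<in> L \<Longrightarrow> meet_in L {x,y} \<le> x"
  using cl_glb unfolding is_glb_in_def by blast
lemma cl_meet_le2: "complete_on L \<Longrightarrow> x \<in> L \<Longrightarrow> y \<in> L \<Longrightarrow> meet_in L {x,y} \<le> y"
  using cl_glb unfolding is_glb_in_def by blast
lemma cl_meet_greatest: "complete_on L \<Longrightarrow> x \<in> L \<Longrightarrow> y \<in> L \<Longrightarrow> z \<in> L \<Longrightarrow> z \<le> x \<Longrightarrow> z \<le> y \<Longrightarrow> z \<le> meet_in L {x,y}"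
  using cl_glb unfolding is_glb_in_def by blast

lemma js_lub: "join_spec P U \<Longrightarrow> S \<in> U \<Longrightarrow> is_lub_in P S (join_in P S)"
  unfolding join_spec_def by (blast intro: join_in_lub)

lemma js_join_mem: "join_spec P U \<Longrightarrow> S \<in> U \<Longrightarrow> join_in P S \<in> P"
  using js_lub unfolding is_lub_in_def by blast

lemma js_join_upper: "join_spec P U \<Longrightarrow> S \<in> U \<Longrightarrow> s \<in> S \<Longrightarrow> s \<le> join_in P S"
  using js_lub unfolding is_lub_in_def by blast

lemma js_join_least: "join_spec P U \<Longrightarrow> S \<in> U \<Longrightarrow> y \<in> P \<Longrightarrow> (\<And>s. s \<in> S \<Longrightarrow> s \<le> y) \<Longrightarrow> join_in P S \<le> y"
  using js_lub unfolding is_lub_in_def by blast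

lemma P_ideal: "join_spec P U \<Longrightarrow> P \<in> ideals P U"
  unfolding ideals_def U_ideal_def using js_join_mem by blast

lemma ideal_sub: "C \<in> ideals P U \<Longrightarrow> C \<subseteq> P"
  unfolding ideals_def U_ideal_def by blast
lemma ideal_down: "C \<in> ideals P U \<Longrightarrow> x \<in> C \<Longrightarrow> y \<in> P \<Longrightarrow> y \<le> x \<Longrightarrow> y \<in> C"
  unfolding ideals_def U_ideal_def by blast
lemma ideal_join: "C \<in> ideals P U \<Longrightarrow> S \<in> U \<Longrightarrow> S \<subseteq> C \<Longrightarrow> join_in P S \<in> C"
  unfolding ideals_def U_ideal_def by blast

lemma Gamma_ideal: "join_spec P U \<Longrightarrow> X \<subseteq> P \<Longrightarrow> Gamma P U X \<in> ideals P U"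
proof -
  assume js: "join_spec P U" and X: "X \<subseteq> P"
  let ?F = "{C \<in> ideals P U. X \<subseteq> C}"
  have PF: "P \<in> ?F" using P_ideal[OF js] X by blast
  have "U_ideal P U (\<Inter> ?F)" unfolding U_ideal_def
  proof (intro conjI ballI impI)
    show "\<Inter> ?F \<subseteq> P" using PF by (rule Inter_lower)
    show "y \<in> \<Inter> ?F" if "x \<in> \<Inter> ?F" "y \<in> P" "y \<le> x" for x y
    proof (rule InterI)
      fix C assume "C \<in> ?F"
      then show "y \<in> C" using that ideal_down[of C P U x y] by auto
    qed
    show "join_in P S \<in> \<Inter> ?F" if "S \<in> U" "S \<subseteq> \<Inter> ?F" for S
    proof (rule InterI)
      fix C assume "C \<in> ?F"
      then show "join_in P S \<in> C" using that ideal_join[of C P U S] by auto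
    qed
  qed
  then show ?thesis unfolding Gamma_def ideals_def by simp
qed

lemma Gamma_incl: "X \<subseteq> Gamma P U X"
  unfolding Gamma_def by (rule Inter_greatest) simp

lemma Gamma_least: "C \<in> ideals P U \<Longrightarrow> X \<subseteq> C \<Longrightarrow> Gamma P U X \<subseteq> C"
  unfolding Gamma_def by (rule Inter_lower) simp

lemma Gamma_mono: "X \<subseteq> Y \<Longrightarrow> Gamma P U X \<subseteq> Gamma P U Y"
  unfolding Gamma_def by (rule Inter_anti_mono) auto

lemma ideals_anti: "W \<subseteq> V \<Longrightarrow> ideals P V \<subseteq> ideals P W"
  unfolding ideals_def U_ideal_def by auto

lemma Gamma_anti: "W \<subseteq> V \<Longrightarrow> Gamma P W X \<subseteq> Gamma P V X"
  unfolding Gamma_def using ideals_anti[of W V P] by (intro Inter_anti_mono) auto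

lemma Gamma_id: "C \<in> ideals P U \<Longrightarrow> Gamma P U C = C"
  using Gamma_least[of C P U C] Gamma_incl[of C P U] by auto

lemma Gamma_squeeze: "join_spec P U \<Longrightarrow> X \<subseteq> P \<Longrightarrow> X \<subseteq> Y \<Longrightarrow> Y \<subseteq> Gamma P U X \<Longrightarrow> Gamma P U Y = Gamma P U X"
  using Gamma_ideal[of P U X] Gamma_least[of "Gamma P U X" P U Y] Gamma_mono[of X Y P U] by auto

lemma ideals_lub: "join_spec P U \<Longrightarrow> A \<subseteq> ideals P U \<Longrightarrow> is_lub_in (ideals P U) A (Gamma P U (\<Union>A))"
proof -
  assume js: "join_spec P U" and A: "A \<subseteq> ideals P U"
  have sub: "\<Union>A \<subseteq> P" using A ideal_sub by blast
  show ?thesis unfolding is_lub_in_def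
  proof (intro conjI ballI impI)
    show "Gamma P U (\<Union>A) \<in> ideals P U" using Gamma_ideal[OF js sub] .
    show "s \<le> Gamma P U (\<Union>A)" if "s \<in> A" for s
      using that Gamma_incl[of "\<Union>A" P U] by auto
    show "Gamma P U (\<Union>A) \<le> y" if "y \<in> ideals P U" "\<forall>s\<in>A. s \<le> y" for y
      using that Gamma_least[of y P U "\<Union>A"] by auto
  qed
qed

lemma ideals_join: "join_spec P U \<Longrightarrow> A \<subseteq> ideals P U \<Longrightarrow> join_in (ideals P U) A = Gamma P U (\<Union>A)"
  by (rule join_in_eq, rule ideals_lub)

lemma ideals_complete: "join_spec P U \<Longrightarrow> complete_on (ideals P U)"
  unfolding complete_on_def has_join_def
proof (intro allI impI)
  fix A assume "join_spec P U" "A \<subseteq> ideals P U"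
  then show "\<exists>x. is_lub_in (ideals P U) A x" by (intro exI, rule ideals_lub)
qed

lemma ideal_Int: "a \<in> ideals P U \<Longrightarrow> b \<in> ideals P U \<Longrightarrow> a \<inter> b \<in> ideals P U"
proof -
  assume a: "a \<in> ideals P U" and b: "b \<in> ideals P U"
  have "U_ideal P U (a \<inter> b)" unfolding U_ideal_def
  proof (intro conjI ballI impI)
    show "a \<inter> b \<subseteq> P" using ideal_sub[OF a] by auto
    show "y \<in> a \<inter> b" if "x \<in> a \<inter> b" "y \<in> P" "y \<le> x" for x y
      using that ideal_down[OF a, of x y] ideal_down[OF b, of x y] by auto
    show "join_in P S \<in> a \<inter> b" if "S \<in> U" "S \<subseteq> a \<inter> b" for S
      using that ideal_join[OF a, of S] ideal_join[OF b, of S] by auto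
  qed
  then show ?thesis unfolding ideals_def by simp
qed

lemma ideals_meet: "a \<in> ideals P U \<Longrightarrow> b \<in> ideals P U \<Longrightarrow> meet_in (ideals P U) {a,b} = a \<inter> b"
proof (rule meet_in_eq)
  assume a: "a \<in> ideals P U" and b: "b \<in> ideals P U"
  show "is_glb_in (ideals P U) {a, b} (a \<inter> b)"
    unfolding is_glb_in_def
  proof (intro conjI ballI impI)
    show "a \<inter> b \<in> ideals P U" using ideal_Int[OF a b] .
    show "a \<inter> b \<le> s" if "s \<in> {a,b}" for s using that by auto
    show "y \<le> a \<inter> b" if "y \<in> ideals P U" "\<forall>s\<in>{a, b}. y \<le> s" for y
      using that by auto
  qed
qed

lemma eta_ideal: "join_spec P U \<Longrightarrow> p \<in> P \<Longrightarrow> eta P p \<in> ideals P U"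
proof -
  assume js: "join_spec P U" and p: "p \<in> P"
  have "U_ideal P U {q \<in> P. q \<le> p}" unfolding U_ideal_def
  proof (intro conjI ballI impI)
    show "{q \<in> P. q \<le> p} \<subseteq> P" by auto
    show "y \<in> {q \<in> P. q \<le> p}" if "x \<in> {q \<in> P. q \<le> p}" "y \<in> P" "y \<le> x" for x y
      using that by auto
    show "join_in P S \<in> {q \<in> P. q \<le> p}" if "S \<in> U" "S \<subseteq> {q \<in> P. q \<le> p}" for S
      using that js_join_mem[OF js] js_join_least[OF js, of S p] p by auto
  qed
  then show ?thesis unfolding ideals_def eta_def by simp
qed

lemma eta_mem: "p \<in> P \<Longrightarrow> p \<in> eta P p"
  unfolding eta_def by simp

lemma Union_eta: "C \<in> ideals P U \<Longrightarrow> \<Union>(eta P ` C) = C"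
proof
  assume C: "C \<in> ideals P U"
  show "\<Union>(eta P ` C) \<subseteq> C"
    using C ideal_down[OF C] unfolding eta_def by auto
  show "C \<subseteq> \<Union>(eta P ` C)"
    using ideal_sub[OF C] eta_mem by auto
qed

lemma ideal_join_eta: "join_spec P U \<Longrightarrow> C \<in> ideals P U \<Longrightarrow> join_in (ideals P U) (eta P ` C) = C"
proof -
  assume js: "join_spec P U" and C: "C \<in> ideals P U"
  have "eta P ` C \<subseteq> ideals P U" using eta_ideal[OF js] ideal_sub[OF C] by auto
  then have "join_in (ideals P U) (eta P ` C) = Gamma P U C"
    using ideals_join[OF js] Union_eta[OF C] by metis
  then show ?thesis using Gamma_id[OF C] by simp
qed



definition distr :: "'a::order set \<Rightarrow> 'a set set \<Rightarrow> bool" where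
  "distr P U \<longleftrightarrow> (\<forall>S\<in>U. \<forall>p\<in>P. p \<le> join_in P S \<longrightarrow>
      p \<in> Gamma P U {r\<in>P. r \<le> p \<and> (\<exists>s\<in>S. r \<le> s)})"

lemma js_sub: "join_spec P U \<Longrightarrow> S \<in> U \<Longrightarrow> S \<subseteq> P"
  unfolding join_spec_def by auto

lemma frame_distr:
  assumes js: "join_spec P U" and fr: "frame_on (ideals P U)"
  shows "distr P U"
  unfolding distr_def
proof (intro ballI impI)
  fix S p assume S: "S \<in> U" and p: "p \<in> P" and le: "p \<le> join_in P S"
  let ?I = "ideals P U"
  let ?a = "eta P p"
  let ?A = "eta P ` S"
  have SP: "S \<subseteq> P" using js_sub[OF js S] .
  have a: "?a \<in> ?I" using eta_ideal[OF js p] .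
  have A: "?A \<subseteq> ?I" using eta_ideal[OF js] SP by auto
  have UA: "\<Union>?A \<subseteq> P" unfolding eta_def by auto
  have GI: "Gamma P U (\<Union>?A) \<in> ?I" using Gamma_ideal[OF js UA] .
  have "S \<subseteq> \<Union>?A" using SP eta_mem by auto
  then have "S \<subseteq> Gamma P U (\<Union>?A)" using Gamma_incl[of "\<Union>?A" P U] by auto
  then have "join_in P S \<in> Gamma P U (\<Union>?A)" using ideal_join[OF GI S] by auto
  then have pG: "p \<in> Gamma P U (\<Union>?A)" using ideal_down[OF GI _ p le] by auto
  have jA: "join_in ?I ?A = Gamma P U (\<Union>?A)" using ideals_join[OF js A] .
  have "meet_in ?I {?a, join_in ?I ?A} = ?a \<inter> Gamma P U (\<Union>?A)"
    using jA ideals_meet[OF a GI] by simp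
  moreover have "meet_in ?I {?a, join_in ?I ?A} = join_in ?I ((\<lambda>b. meet_in ?I {?a, b}) ` ?A)"
  proof -
    have H: "\<forall>a\<in>?I. \<forall>A. A \<subseteq> ?I \<longrightarrow> meet_in ?I {a, join_in ?I A} = join_in ?I ((\<lambda>b. meet_in ?I {a, b}) ` A)"
      using fr unfolding frame_on_def by (elim conjE)
    show ?thesis using H[rule_format, OF a A] .
  qed
  moreover have "(\<lambda>b. meet_in ?I {?a, b}) ` ?A = (\<lambda>b. ?a \<inter> b) ` ?A"
    using ideals_meet[OF a] A by (intro image_cong) auto
  moreover have "(\<lambda>b. ?a \<inter> b) ` ?A \<subseteq> ?I" using ideal_Int[OF a] A by auto
  ultimately have "?a \<inter> Gamma P U (\<Union>?A) = Gamma P U (\<Union>((\<lambda>b. ?a \<inter> b) ` ?A))"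
    using ideals_join[OF js, of "(\<lambda>b. ?a \<inter> b) ` ?A"] by simp
  moreover have "\<Union>((\<lambda>b. ?a \<inter> b) ` ?A) = {r\<in>P. r \<le> p \<and> (\<exists>s\<in>S. r \<le> s)}"
    unfolding eta_def by auto
  moreover have "p \<in> ?a \<inter> Gamma P U (\<Union>?A)" using pG eta_mem[OF p] by auto
  ultimately show "p \<in> Gamma P U {r\<in>P. r \<le> p \<and> (\<exists>s\<in>S. r \<le> s)}" by simp
qed

lemma claimA:
  assumes js: "join_spec P U" and d: "distr P U" and XP: "X \<subseteq> P"
    and Xd: "\<And>x y. x \<in> X \<Longrightarrow> y \<in> P \<Longrightarrow> y \<le> x \<Longrightarrow> y \<in> X"
    and q: "q \<in> Gamma P U X"
  shows "q \<in> Gamma P U {r\<in>P. r \<le> q \<and> r \<in> X}"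
proof -
  define K where "K = {q\<in>P. \<forall>p\<in>P. p \<le> q \<longrightarrow> p \<in> Gamma P U {r\<in>P. r \<le> p \<and> r \<in> X}}"
  have "U_ideal P U K" unfolding U_ideal_def
  proof (intro conjI ballI impI)
    show "K \<subseteq> P" unfolding K_def by auto
    show "y \<in> K" if "x \<in> K" "y \<in> P" "y \<le> x" for x y
    proof -
      have "\<forall>p\<in>P. p \<le> y \<longrightarrow> p \<in> Gamma P U {r\<in>P. r \<le> p \<and> r \<in> X}"
      proof (intro ballI impI)
        fix p assume "p \<in> P" "p \<le> y"
        moreover have "p \<le> x" using \<open>p \<le> y\<close> \<open>y \<le> x\<close> by (rule order.trans)
        ultimately show "p \<in> Gamma P U {r\<in>P. r \<le> p \<and> r \<in> X}" using \<open>x \<in> K\<close> unfolding K_def by simp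
      qed
      then show ?thesis using \<open>y \<in> P\<close> unfolding K_def by simp
    qed
    show "join_in P S \<in> K" if S: "S \<in> U" and SK: "S \<subseteq> K" for S
      unfolding K_def
    proof (intro CollectI conjI ballI impI)
      show "join_in P S \<in> P" using js_join_mem[OF js S] .
      fix p assume p: "p \<in> P" and le: "p \<le> join_in P S"
      let ?Gp = "Gamma P U {r\<in>P. r \<le> p \<and> r \<in> X}"
      have Gp: "?Gp \<in> ideals P U" by (rule Gamma_ideal[OF js]) auto
      have "{r\<in>P. r \<le> p \<and> (\<exists>s\<in>S. r \<le> s)} \<subseteq> ?Gp"
      proof
        fix r assume r: "r \<in> {r\<in>P. r \<le> p \<and> (\<exists>s\<in>S. r \<le> s)}"
        then obtain s where s: "s \<in> S" "r \<le> s" and rP: "r \<in> P" and rp: "r \<le> p" by auto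
        have "s \<in> K" using s SK by auto
        then have "r \<in> Gamma P U {t\<in>P. t \<le> r \<and> t \<in> X}" using rP s unfolding K_def by auto
        moreover have "Gamma P U {t\<in>P. t \<le> r \<and> t \<in> X} \<subseteq> ?Gp"
        proof (rule Gamma_mono, rule subsetI)
          fix t assume "t \<in> {t\<in>P. t \<le> r \<and> t \<in> X}"
          then have "t \<in> P" "t \<le> r" "t \<in> X" by simp_all
          moreover have "t \<le> p" using \<open>t \<le> r\<close> rp by (rule order.trans)
          ultimately show "t \<in> {r\<in>P. r \<le> p \<and> r \<in> X}" by simp
        qed
        ultimately show "r \<in> ?Gp" by auto
      qed
      then have "Gamma P U {r\<in>P. r \<le> p \<and> (\<exists>s\<in>S. r \<le> s)} \<subseteq> ?Gp"
        using Gamma_least[OF Gp] by auto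
      moreover have "p \<in> Gamma P U {r\<in>P. r \<le> p \<and> (\<exists>s\<in>S. r \<le> s)}"
        using d S p le unfolding distr_def by auto
      ultimately show "p \<in> ?Gp" by auto
    qed
  qed
  then have K: "K \<in> ideals P U" unfolding ideals_def by simp
  have "X \<subseteq> K"
  proof
    fix x assume x: "x \<in> X"
    have "p \<in> Gamma P U {r\<in>P. r \<le> p \<and> r \<in> X}" if "p \<in> P" "p \<le> x" for p
    proof -
      have "p \<in> {r\<in>P. r \<le> p \<and> r \<in> X}" using that Xd[OF x] by auto
      then show ?thesis using Gamma_incl[of "{r\<in>P. r \<le> p \<and> r \<in> X}" P U] by (rule subsetD[rotated])
    qed
    then show "x \<in> K" using x XP unfolding K_def by auto
  qed
  then have "Gamma P U X \<subseteq> K" using Gamma_least[OF K] by auto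
  then have "q \<in> K" using q by auto
  then show ?thesis unfolding K_def by auto
qed

lemma distr_frame:
  assumes js: "join_spec P U" and d: "distr P U"
  shows "frame_on (ideals P U)"
  unfolding frame_on_def
proof (intro conjI ballI allI impI)
  let ?I = "ideals P U"
  show "complete_on ?I" using ideals_complete[OF js] .
  fix a A assume a: "a \<in> ?I" and A: "A \<subseteq> ?I"
  have UA: "\<Union>A \<subseteq> P" proof (rule Union_least)
    fix C assume "C \<in> A"
    then show "C \<subseteq> P" using ideal_sub[OF subsetD[OF A]] by simp
  qed
  have GI: "Gamma P U (\<Union>A) \<in> ?I" using Gamma_ideal[OF js UA] .
  have lhs: "meet_in ?I {a, join_in ?I A} = a \<inter> Gamma P U (\<Union>A)"
    using ideals_join[OF js A] ideals_meet[OF a GI] by simp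
  have img: "(\<lambda>b. meet_in ?I {a, b}) ` A = (\<lambda>b. a \<inter> b) ` A"
    using ideals_meet[OF a] A by (intro image_cong) auto
  have imgI: "(\<lambda>b. a \<inter> b) ` A \<subseteq> ?I" using ideal_Int[OF a] A by auto
  have rhs: "join_in ?I ((\<lambda>b. meet_in ?I {a, b}) ` A) = Gamma P U (\<Union>((\<lambda>b. a \<inter> b) ` A))"
    using img ideals_join[OF js imgI] by simp
  have "Gamma P U (\<Union>((\<lambda>b. a \<inter> b) ` A)) \<subseteq> a \<inter> Gamma P U (\<Union>A)"
  proof (rule Gamma_least)
    show "a \<inter> Gamma P U (\<Union>A) \<in> ?I" using ideal_Int[OF a GI] .
    show "\<Union>((\<lambda>b. a \<inter> b) ` A) \<subseteq> a \<inter> Gamma P U (\<Union>A)"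
      using Gamma_incl[of "\<Union>A" P U] by auto
  qed
  moreover have "a \<inter> Gamma P U (\<Union>A) \<subseteq> Gamma P U (\<Union>((\<lambda>b. a \<inter> b) ` A))"
  proof
    fix q assume q: "q \<in> a \<inter> Gamma P U (\<Union>A)"
    have Xd: "y \<in> \<Union>A" if xy: "x \<in> \<Union>A" "y \<in> P" "y \<le> x" for x y
    proof -
      obtain C where C: "C \<in> A" "x \<in> C" using xy(1) by auto
      then have "y \<in> C" using ideal_down[OF subsetD[OF A C(1)] C(2) xy(2) xy(3)] by simp
      then show ?thesis using C(1) by auto
    qed
    have "q \<in> Gamma P U {r\<in>P. r \<le> q \<and> r \<in> \<Union>A}"
    proof -
      have "q \<in> Gamma P U (\<Union>A)" using q by simp
      then show ?thesis using claimA[OF js d UA Xd] by simp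
    qed
    moreover have "{r\<in>P. r \<le> q \<and> r \<in> \<Union>A} \<subseteq> \<Union>((\<lambda>b. a \<inter> b) ` A)"
      using q ideal_down[OF a] by auto
    ultimately show "q \<in> Gamma P U (\<Union>((\<lambda>b. a \<inter> b) ` A))"
      using Gamma_mono[of "{r\<in>P. r \<le> q \<and> r \<in> \<Union>A}" "\<Union>((\<lambda>b. a \<inter> b) ` A)" P U] by auto
  qed
  ultimately show "meet_in ?I {a, join_in ?I A} = join_in ?I ((\<lambda>b. meet_in ?I {a, b}) ` A)"
    using lhs rhs by auto
qed

lemma nucleus:
  assumes js: "join_spec P U" and d: "distr P U"
    and X: "X \<in> ideals P V" and Y: "Y \<in> ideals P V"
  shows "Gamma P U X \<inter> Gamma P U Y \<subseteq> Gamma P U (X \<inter> Y)"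
proof
  fix q assume q: "q \<in> Gamma P U X \<inter> Gamma P U Y"
  have XP: "X \<subseteq> P" and YP: "Y \<subseteq> P" using X Y ideal_sub by auto
  have Xd: "\<And>x y. x \<in> X \<Longrightarrow> y \<in> P \<Longrightarrow> y \<le> x \<Longrightarrow> y \<in> X" using ideal_down[OF X] by blast
  have Yd: "\<And>x y. x \<in> Y \<Longrightarrow> y \<in> P \<Longrightarrow> y \<le> x \<Longrightarrow> y \<in> Y" using ideal_down[OF Y] by blast
  have GXY: "Gamma P U (X \<inter> Y) \<in> ideals P U" using Gamma_ideal[OF js, of "X \<inter> Y"] XP by auto
  have GY: "Gamma P U Y \<in> ideals P U" using Gamma_ideal[OF js YP] .
  have q1: "q \<in> Gamma P U {r\<in>P. r \<le> q \<and> r \<in> X}" using q claimA[OF js d XP Xd] by simp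
  have "{r\<in>P. r \<le> q \<and> r \<in> X} \<subseteq> Gamma P U (X \<inter> Y)"
  proof
    fix r assume r: "r \<in> {r\<in>P. r \<le> q \<and> r \<in> X}"
    then have "r \<in> Gamma P U Y" using ideal_down[OF GY, of q r] q by auto
    then have "r \<in> Gamma P U {t\<in>P. t \<le> r \<and> t \<in> Y}" using claimA[OF js d YP Yd] by simp
    moreover have "{t\<in>P. t \<le> r \<and> t \<in> Y} \<subseteq> X \<inter> Y" using r Xd by auto
    ultimately show "r \<in> Gamma P U (X \<inter> Y)" using Gamma_mono[of "{t\<in>P. t \<le> r \<and> t \<in> Y}" "X \<inter> Y" P U] by auto
  qed
  then show "q \<in> Gamma P U (X \<inter> Y)" using q1 Gamma_least[OF GXY] by auto
qed



lemma eta_le: "x \<in> P \<Longrightarrow> y \<in> P \<Longrightarrow> x \<le> y \<longleftrightarrow> eta P x \<le> eta P y"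
proof
  assume "x \<in> P" "y \<in> P" "x \<le> y"
  then show "eta P x \<le> eta P y" unfolding eta_def using order.trans by auto
next
  assume "x \<in> P" "y \<in> P" "eta P x \<le> eta P y"
  then have "x \<in> eta P y" using eta_mem[of x P] by auto
  then show "x \<le> y" unfolding eta_def by simp
qed

lemma F_obj:
  assumes fg: "frame_generating P U"
  shows "join_completion P (ideals P U) (eta P) \<and> frame_on (ideals P U)"
proof -
  have js: "join_spec P U" and fr: "frame_on (ideals P U)" using fg unfolding frame_generating_def by auto
  have "join_completion P (ideals P U) (eta P)" unfolding join_completion_def
  proof (intro conjI ballI)
    show "complete_on (ideals P U)" using ideals_complete[OF js] .
    show "eta P ` P \<subseteq> ideals P U" using eta_ideal[OF js] by auto
    show "x \<le> y \<longleftrightarrow> eta P x \<le> eta P y" if "x \<in> P" "y \<in> P" for x y using eta_le that by blast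
    show "\<exists>A. A \<subseteq> P \<and> x = join_in (ideals P U) (eta P ` A)" if "x \<in> ideals P U" for x
      using that ideal_sub[OF that] ideal_join_eta[OF js that] by (intro exI[of _ x]) simp
  qed
  then show ?thesis using fr by simp
qed

lemma F_arr:
  assumes fg1: "frame_generating P U1" and fg2: "frame_generating P U2" and sub: "U1 \<subseteq> U2"
  shows "frm_arrow P (ideals P U1) (eta P) (ideals P U2) (eta P) (Gamma P U2)"
proof -
  have js1: "join_spec P U1" using fg1 unfolding frame_generating_def by auto
  have js2: "join_spec P U2" and fr2: "frame_on (ideals P U2)" using fg2 unfolding frame_generating_def by auto
  have d2: "distr P U2" using frame_distr[OF js2 fr2] .
  show ?thesis unfolding frm_arrow_def jc_arrow_def
  proof (intro conjI allI impI ballI)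
    show "Gamma P U2 ` ideals P U1 \<subseteq> ideals P U2"
      using Gamma_ideal[OF js2] ideal_sub by blast
  next
    fix A assume A: "A \<subseteq> ideals P U1"
    have UA: "\<Union>A \<subseteq> P"
    proof (rule Union_least)
      fix C assume "C \<in> A"
      then show "C \<subseteq> P" using ideal_sub[OF subsetD[OF A]] by simp
    qed
    have "Gamma P U2 (join_in (ideals P U1) A) = Gamma P U2 (Gamma P U1 (\<Union>A))"
      using ideals_join[OF js1 A] by simp
    also have "\<dots> = Gamma P U2 (\<Union>A)"
    proof (rule Gamma_squeeze[OF js2 UA])
      show "\<Union>A \<subseteq> Gamma P U1 (\<Union>A)" by (rule Gamma_incl)
      show "Gamma P U1 (\<Union>A) \<subseteq> Gamma P U2 (\<Union>A)" by (rule Gamma_anti[OF sub])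
    qed
    also have "\<dots> = Gamma P U2 (\<Union>(Gamma P U2 ` A))"
    proof (rule Gamma_squeeze[OF js2 UA, symmetric])
      show "\<Union>A \<subseteq> \<Union>(Gamma P U2 ` A)" using Gamma_incl by blast
      show "\<Union>(Gamma P U2 ` A) \<subseteq> Gamma P U2 (\<Union>A)"
      proof (rule Union_least)
        fix X assume "X \<in> Gamma P U2 ` A"
        then obtain C where "C \<in> A" "X = Gamma P U2 C" by auto
        then show "X \<subseteq> Gamma P U2 (\<Union>A)" using Gamma_mono[of C "\<Union>A" P U2] by auto
      qed
    qed
    also have "\<dots> = join_in (ideals P U2) (Gamma P U2 ` A)"
    proof (rule ideals_join[OF js2, symmetric])
      show "Gamma P U2 ` A \<subseteq> ideals P U2"
      proof
        fix X assume "X \<in> Gamma P U2 ` A"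
        then obtain C where "C \<in> A" "X = Gamma P U2 C" by auto
        then show "X \<in> ideals P U2" using Gamma_ideal[OF js2, of C] ideal_sub[OF subsetD[OF A]] by auto
      qed
    qed
    finally show "Gamma P U2 (join_in (ideals P U1) A) = join_in (ideals P U2) (Gamma P U2 ` A)" .
  next
    fix p assume "p \<in> P"
    then show "Gamma P U2 (eta P p) = eta P p" using Gamma_id eta_ideal[OF js2] by blast
  next
    fix a b assume a: "a \<in> ideals P U1" and b: "b \<in> ideals P U1"
    have aP: "a \<subseteq> P" and bP: "b \<subseteq> P" using a b ideal_sub by auto
    have Ga: "Gamma P U2 a \<in> ideals P U2" and Gb: "Gamma P U2 b \<in> ideals P U2"
      using Gamma_ideal[OF js2] aP bP by auto
    have "Gamma P U2 (meet_in (ideals P U1) {a, b}) = Gamma P U2 (a \<inter> b)"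
      using ideals_meet[OF a b] by simp
    also have "\<dots> = Gamma P U2 a \<inter> Gamma P U2 b"
    proof
      show "Gamma P U2 (a \<inter> b) \<subseteq> Gamma P U2 a \<inter> Gamma P U2 b"
        using Gamma_mono[of "a \<inter> b" a P U2] Gamma_mono[of "a \<inter> b" b P U2] by auto
      show "Gamma P U2 a \<inter> Gamma P U2 b \<subseteq> Gamma P U2 (a \<inter> b)"
        using nucleus[OF js2 d2 a b] .
    qed
    also have "\<dots> = meet_in (ideals P U2) {Gamma P U2 a, Gamma P U2 b}"
      using ideals_meet[OF Ga Gb] by simp
    finally show "Gamma P U2 (meet_in (ideals P U1) {a, b}) = meet_in (ideals P U2) {Gamma P U2 a, Gamma P U2 b}" .
  qed
qed



lemma jc_complete: "join_completion P L e \<Longrightarrow> complete_on L"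
  unfolding join_completion_def by simp
lemma jc_mem: "join_completion P L e \<Longrightarrow> p \<in> P \<Longrightarrow> e p \<in> L"
  unfolding join_completion_def by auto
lemma jc_img: "join_completion P L e \<Longrightarrow> A \<subseteq> P \<Longrightarrow> e ` A \<subseteq> L"
  unfolding join_completion_def by auto
lemma jc_le: "join_completion P L e \<Longrightarrow> x \<in> P \<Longrightarrow> y \<in> P \<Longrightarrow> x \<le> y \<longleftrightarrow> e x \<le> e y"
  unfolding join_completion_def by auto
lemma jc_dense: "join_completion P L e \<Longrightarrow> z \<in> L \<Longrightarrow> \<exists>A. A \<subseteq> P \<and> z = join_in L (e ` A)"
  unfolding join_completion_def by auto

lemma lub_single: "p \<in> P \<Longrightarrow> join_in P {p} = p"
  by (rule join_in_eq) (simp add: is_lub_in_def)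

lemma has_join_single: "p \<in> P \<Longrightarrow> has_join P {p}"
  unfolding has_join_def by (rule exI[of _ p]) (simp add: is_lub_in_def)

lemma Uof_sub: "S \<in> U_of P L e \<Longrightarrow> S \<subseteq> P"
  unfolding U_of_def by simp
lemma Uof_has: "S \<in> U_of P L e \<Longrightarrow> has_join P S"
  unfolding U_of_def by simp
lemma Uof_eq: "S \<in> U_of P L e \<Longrightarrow> e (join_in P S) = join_in L (e ` S)"
  unfolding U_of_def by simp

definition triv :: "'a set \<Rightarrow> 'a set set" where
  "triv P = (\<lambda>p. {p}) ` P"

lemma triv_fg: "frame_generating P (triv P)"
proof -
  have js: "join_spec P (triv P)" unfolding join_spec_def triv_def
    using has_join_single by auto
  have "distr P (triv P)" unfolding distr_def
  proof (intro ballI impI)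
    fix S q assume S: "S \<in> triv P" and q: "q \<in> P" and le: "q \<le> join_in P S"
    obtain p where p: "p \<in> P" "S = {p}" using S unfolding triv_def by auto
    have "q \<in> {r\<in>P. r \<le> q \<and> (\<exists>s\<in>S. r \<le> s)}" using q le p lub_single[of p P] by auto
    then show "q \<in> Gamma P (triv P) {r\<in>P. r \<le> q \<and> (\<exists>s\<in>S. r \<le> s)}"
      using Gamma_incl by (rule subsetD[rotated])
  qed
  then show ?thesis unfolding frame_generating_def using js distr_frame[OF js] by simp
qed

lemma triv_Uof: "join_completion P L e \<Longrightarrow> triv P \<subseteq> U_of P L e"
proof
  fix S assume jc: "join_completion P L e" and "S \<in> triv P"
  then obtain p where p: "p \<in> P" "S = {p}" unfolding triv_def by auto
  have "join_in L {e p} = e p" using lub_single jc_mem[OF jc p(1)] by blast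
  then show "S \<in> U_of P L e" unfolding U_of_def using p lub_single[of p P] has_join_single[of p P] by simp
qed

lemma K_ideal:
  assumes jc: "join_completion P L e" and U: "U \<subseteq> U_of P L e" and m: "m \<in> L"
  shows "{p\<in>P. e p \<le> m} \<in> ideals P U"
proof -
  have "U_ideal P U {p\<in>P. e p \<le> m}" unfolding U_ideal_def
  proof (intro conjI ballI impI)
    show "{p\<in>P. e p \<le> m} \<subseteq> P" by auto
    show "y \<in> {p\<in>P. e p \<le> m}" if "x \<in> {p\<in>P. e p \<le> m}" "y \<in> P" "y \<le> x" for x y
    proof -
      have "e y \<le> e x" using jc_le[OF jc, of y x] that by simp
      then show ?thesis using that order.trans by auto
    qed
    show "join_in P S \<in> {p\<in>P. e p \<le> m}" if S: "S \<in> U" and SK: "S \<subseteq> {p\<in>P. e p \<le> m}" for S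
    proof -
      have SU: "S \<in> U_of P L e" using S U by auto
      have jP: "join_in P S \<in> P" using join_in_lub[OF Uof_has[OF SU]] unfolding is_lub_in_def by simp
      have SP: "S \<subseteq> P" using Uof_sub[OF SU] .
      have "join_in L (e ` S) \<le> m"
        using cl_least[OF jc_complete[OF jc] jc_img[OF jc SP] m] SK by auto
      then show ?thesis using Uof_eq[OF SU] jP by simp
    qed
  qed
  then show ?thesis unfolding ideals_def by simp
qed

lemma join_Gamma:
  assumes jc: "join_completion P L e" and U: "U \<subseteq> U_of P L e" and XP: "X \<subseteq> P"
  shows "join_in L (e ` Gamma P U X) = join_in L (e ` X)"
proof -
  have c: "complete_on L" using jc_complete[OF jc] .
  let ?m = "join_in L (e ` X)"
  have m: "?m \<in> L" using cl_mem[OF c jc_img[OF jc XP]] .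
  have K: "{p\<in>P. e p \<le> ?m} \<in> ideals P U" using K_ideal[OF jc U m] .
  have "X \<subseteq> {p\<in>P. e p \<le> ?m}" using XP cl_upper[OF c jc_img[OF jc XP]] by auto
  then have GK: "Gamma P U X \<subseteq> {p\<in>P. e p \<le> ?m}" using Gamma_least[OF K] by simp
  then have GP: "Gamma P U X \<subseteq> P" by auto
  have "join_in L (e ` Gamma P U X) \<le> ?m"
    using cl_least[OF c jc_img[OF jc GP] m] GK by auto
  moreover have "?m \<le> join_in L (e ` Gamma P U X)"
    using cl_mono[OF c _ jc_img[OF jc GP]] Gamma_incl[of X P U] by (meson image_mono)
  ultimately show ?thesis by (rule order.antisym)
qed

lemma Uplus_Uof:
  assumes jc: "join_completion P L e" and U: "U \<subseteq> U_of P L e"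
  shows "Uplus P U \<subseteq> U_of P L e"
proof
  fix S assume S: "S \<in> Uplus P U"
  have SP: "S \<subseteq> P" and hj: "has_join P S" and xG: "join_in P S \<in> Gamma P U S"
    using S unfolding Uplus_def by auto
  have c: "complete_on L" using jc_complete[OF jc] .
  let ?x = "join_in P S"
  have lub: "is_lub_in P S ?x" using join_in_lub[OF hj] .
  have xP: "?x \<in> P" using lub unfolding is_lub_in_def by simp
  let ?m = "join_in L (e ` S)"
  have m: "?m \<in> L" using cl_mem[OF c jc_img[OF jc SP]] .
  have K: "{p\<in>P. e p \<le> ?m} \<in> ideals P U" using K_ideal[OF jc U m] .
  have "S \<subseteq> {p\<in>P. e p \<le> ?m}" using SP cl_upper[OF c jc_img[OF jc SP]] by auto
  then have "Gamma P U S \<subseteq> {p\<in>P. e p \<le> ?m}" using Gamma_least[OF K] by simp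
  then have le1: "e ?x \<le> ?m" using xG by auto
  have le2: "?m \<le> e ?x"
  proof (rule cl_least[OF c jc_img[OF jc SP] jc_mem[OF jc xP]])
    fix a assume "a \<in> e ` S"
    then obtain s where s: "s \<in> S" "a = e s" by auto
    have "s \<le> ?x" using lub s unfolding is_lub_in_def by simp
    then show "a \<le> e ?x" using jc_le[OF jc, of s ?x] s SP xP by auto
  qed
  have "e ?x = ?m" using le1 le2 by (rule order.antisym)
  then show "S \<in> U_of P L e" unfolding U_of_def using SP hj by simp
qed

lemma Vminus_sub: "Vminus P V \<subseteq> V"
  unfolding Vminus_def by auto

lemma Vminus_greatest: "frame_generating P W \<Longrightarrow> W \<subseteq> V \<Longrightarrow> W \<subseteq> Vminus P V"
  unfolding Vminus_def by auto

lemma Vminus_mono: "V1 \<subseteq> V2 \<Longrightarrow> Vminus P V1 \<subseteq> Vminus P V2"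
  unfolding Vminus_def by auto



lemma Gobj_props:
  assumes jc: "join_completion P L e"
  shows "frame_generating P (G_obj P L e) \<and> maximal_spec P (G_obj P L e)"
proof -
  let ?W = "U_of P L e"
  let ?V = "G_obj P L e"
  have V_def': "?V = Vminus P ?W" unfolding G_obj_def by simp
  have VW: "?V \<subseteq> ?W" using Vminus_sub V_def' by simp
  have TV: "triv P \<subseteq> ?V" using Vminus_greatest[OF triv_fg triv_Uof[OF jc]] V_def' by simp
  have js: "join_spec P ?V" unfolding join_spec_def
  proof (intro conjI ballI)
    show "?V \<subseteq> Pow P" using VW Uof_sub by blast
    show "has_join P S" if "S \<in> ?V" for S using that VW Uof_has by blast
    show "{p} \<in> ?V" if "p \<in> P" for p using that TV unfolding triv_def by auto
  qed
  have d: "distr P ?V" unfolding distr_def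
  proof (intro ballI impI)
    fix S p assume S: "S \<in> ?V" and p: "p \<in> P" and le: "p \<le> join_in P S"
    obtain W where W: "frame_generating P W" "W \<subseteq> ?W" "S \<in> W"
      using S V_def' unfolding Vminus_def by auto
    have jsW: "join_spec P W" and frW: "frame_on (ideals P W)" using W(1) unfolding frame_generating_def by auto
    have "p \<in> Gamma P W {r\<in>P. r \<le> p \<and> (\<exists>s\<in>S. r \<le> s)}"
      using frame_distr[OF jsW frW] W(3) p le unfolding distr_def by auto
    moreover have "W \<subseteq> ?V" using Vminus_greatest[OF W(1) W(2)] V_def' by simp
    ultimately show "p \<in> Gamma P ?V {r\<in>P. r \<le> p \<and> (\<exists>s\<in>S. r \<le> s)}"
      using Gamma_anti by blast
  qed
  have fr: "frame_on (ideals P ?V)" using distr_frame[OF js d] .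
  have fg: "frame_generating P ?V" unfolding frame_generating_def using js fr by simp
  have VU: "?V \<subseteq> Uplus P ?V"
  proof
    fix S assume S: "S \<in> ?V"
    have SP: "S \<subseteq> P" using js_sub[OF js S] .
    have GI: "Gamma P ?V S \<in> ideals P ?V" using Gamma_ideal[OF js SP] .
    have "join_in P S \<in> Gamma P ?V S" using ideal_join[OF GI S Gamma_incl] .
    then show "S \<in> Uplus P ?V" unfolding Uplus_def using SP js S unfolding join_spec_def by auto
  qed
  have id: "ideals P (Uplus P ?V) = ideals P ?V"
  proof
    show "ideals P (Uplus P ?V) \<subseteq> ideals P ?V" using ideals_anti[OF VU] .
    show "ideals P ?V \<subseteq> ideals P (Uplus P ?V)"
    proof
      fix C assume C: "C \<in> ideals P ?V"
      have "U_ideal P (Uplus P ?V) C" unfolding U_ideal_def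
      proof (intro conjI ballI impI)
        show "C \<subseteq> P" using ideal_sub[OF C] .
        show "y \<in> C" if "x \<in> C" "y \<in> P" "y \<le> x" for x y using ideal_down[OF C] that by blast
        show "join_in P S \<in> C" if "S \<in> Uplus P ?V" "S \<subseteq> C" for S
        proof -
          have "join_in P S \<in> Gamma P ?V S" using that unfolding Uplus_def by simp
          then show ?thesis using Gamma_least[OF C \<open>S \<subseteq> C\<close>] by blast
        qed
      qed
      then show "C \<in> ideals P (Uplus P ?V)" unfolding ideals_def by simp
    qed
  qed
  have jsU: "join_spec P (Uplus P ?V)" unfolding join_spec_def
  proof (intro conjI ballI)
    show "Uplus P ?V \<subseteq> Pow P" unfolding Uplus_def by auto
    show "has_join P S" if "S \<in> Uplus P ?V" for S using that unfolding Uplus_def by simp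
    show "{p} \<in> Uplus P ?V" if "p \<in> P" for p using that js VU unfolding join_spec_def by blast
  qed
  have fgU: "frame_generating P (Uplus P ?V)" unfolding frame_generating_def using jsU fr id by simp
  have "Uplus P ?V \<subseteq> ?W" using Uplus_Uof[OF jc VW] .
  then have "Uplus P ?V \<subseteq> ?V" using Vminus_greatest[OF fgU] V_def' by simp
  then have "maximal_spec P ?V" unfolding maximal_spec_def using VU by simp
  then show ?thesis using fg by simp
qed

lemma arrow_Uof_mono:
  assumes jc1: "join_completion P L1 e1" and f: "jc_arrow P L1 e1 L2 e2 f"
  shows "U_of P L1 e1 \<subseteq> U_of P L2 e2"
proof
  fix S assume S: "S \<in> U_of P L1 e1"
  have SP: "S \<subseteq> P" using Uof_sub[OF S] .
  have hj: "has_join P S" using Uof_has[OF S] .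
  have xP: "join_in P S \<in> P" using join_in_lub[OF hj] unfolding is_lub_in_def by simp
  have fe: "\<forall>p\<in>P. f (e1 p) = e2 p" and fj: "\<forall>A. A \<subseteq> L1 \<longrightarrow> f (join_in L1 A) = join_in L2 (f ` A)"
    using f unfolding jc_arrow_def by auto
  have "e2 (join_in P S) = f (e1 (join_in P S))" using fe xP by simp
  also have "\<dots> = f (join_in L1 (e1 ` S))" using Uof_eq[OF S] by simp
  also have "\<dots> = join_in L2 (f ` e1 ` S)" using fj jc_img[OF jc1 SP] by simp
  also have "f ` e1 ` S = e2 ` S" using fe SP by (auto simp: image_image intro!: image_cong)
  finally show "S \<in> U_of P L2 e2" unfolding U_of_def using SP hj by simp
qed

lemma eta_join:
  assumes js: "join_spec P U" and S: "S \<in> U"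
  shows "eta P (join_in P S) = join_in (ideals P U) (eta P ` S)"
proof -
  have SP: "S \<subseteq> P" using js_sub[OF js S] .
  let ?x = "join_in P S"
  have xP: "?x \<in> P" using js_join_mem[OF js S] .
  have A: "eta P ` S \<subseteq> ideals P U" using eta_ideal[OF js] SP by auto
  have UA: "\<Union>(eta P ` S) \<subseteq> P" unfolding eta_def by auto
  have GI: "Gamma P U (\<Union>(eta P ` S)) \<in> ideals P U" using Gamma_ideal[OF js UA] .
  have ex: "eta P ?x \<in> ideals P U" using eta_ideal[OF js xP] .
  have "\<Union>(eta P ` S) \<subseteq> eta P ?x"
  proof
    fix q assume "q \<in> \<Union>(eta P ` S)"
    then obtain s where s: "s \<in> S" "q \<in> P" "q \<le> s" unfolding eta_def by auto
    have "s \<le> ?x" using js_join_upper[OF js S s(1)] .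
    then show "q \<in> eta P ?x" using s order.trans unfolding eta_def by blast
  qed
  then have 1: "Gamma P U (\<Union>(eta P ` S)) \<subseteq> eta P ?x" using Gamma_least[OF ex] by simp
  have "S \<subseteq> \<Union>(eta P ` S)" using SP eta_mem by auto
  then have "S \<subseteq> Gamma P U (\<Union>(eta P ` S))" using Gamma_incl by blast
  then have "?x \<in> Gamma P U (\<Union>(eta P ` S))" using ideal_join[OF GI S] by simp
  then have 2: "eta P ?x \<subseteq> Gamma P U (\<Union>(eta P ` S))"
    using ideal_down[OF GI] unfolding eta_def by blast
  show ?thesis using 1 2 ideals_join[OF js A] by simp
qed

lemma arrow_Uof:
  assumes js: "join_spec P U" and f: "jc_arrow P (ideals P U) (eta P) L e f"
  shows "U \<subseteq> U_of P L e"
proof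
  fix S assume S: "S \<in> U"
  have SP: "S \<subseteq> P" using js_sub[OF js S] .
  have hj: "has_join P S" using js S unfolding join_spec_def by simp
  have xP: "join_in P S \<in> P" using js_join_mem[OF js S] .
  have fe: "\<forall>p\<in>P. f (eta P p) = e p" and fj: "\<forall>A. A \<subseteq> ideals P U \<longrightarrow> f (join_in (ideals P U) A) = join_in L (f ` A)"
    using f unfolding jc_arrow_def by auto
  have A: "eta P ` S \<subseteq> ideals P U" using eta_ideal[OF js] SP by auto
  have "e (join_in P S) = f (eta P (join_in P S))" using fe xP by simp
  also have "\<dots> = f (join_in (ideals P U) (eta P ` S))" using eta_join[OF js S] by simp
  also have "\<dots> = join_in L (f ` eta P ` S)" using fj A by simp
  also have "f ` eta P ` S = e ` S" using fe SP by (auto simp: image_image intro!: image_cong)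
  finally show "S \<in> U_of P L e" unfolding U_of_def using SP hj by simp
qed

lemma arrow_unique:
  assumes js: "join_spec P U" and f: "jc_arrow P (ideals P U) (eta P) L e f" and C: "C \<in> ideals P U"
  shows "f C = join_in L (e ` C)"
proof -
  have fe: "\<forall>p\<in>P. f (eta P p) = e p" and fj: "\<forall>A. A \<subseteq> ideals P U \<longrightarrow> f (join_in (ideals P U) A) = join_in L (f ` A)"
    using f unfolding jc_arrow_def by auto
  have CP: "C \<subseteq> P" using ideal_sub[OF C] .
  have A: "eta P ` C \<subseteq> ideals P U" using eta_ideal[OF js] CP by auto
  have "f C = f (join_in (ideals P U) (eta P ` C))" using ideal_join_eta[OF js C] by simp
  also have "\<dots> = join_in L (f ` eta P ` C)" using fj A by simp
  also have "f ` eta P ` C = e ` C" using fe CP by (auto simp: image_image intro!: image_cong)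
  finally show ?thesis .
qed

lemma Uof_arrow:
  assumes js: "join_spec P U" and jc: "join_completion P L e" and U: "U \<subseteq> U_of P L e"
  shows "jc_arrow P (ideals P U) (eta P) L e (\<lambda>C. join_in L (e ` C))"
  unfolding jc_arrow_def
proof (intro conjI allI impI ballI)
  have c: "complete_on L" using jc_complete[OF jc] .
  show "(\<lambda>C. join_in L (e ` C)) ` ideals P U \<subseteq> L"
    using cl_mem[OF c jc_img[OF jc ideal_sub]] by blast
next
  have c: "complete_on L" using jc_complete[OF jc] .
  fix A assume A: "A \<subseteq> ideals P U"
  have UA: "\<Union>A \<subseteq> P"
  proof (rule Union_least)
    fix C assume "C \<in> A"
    then show "C \<subseteq> P" using ideal_sub[OF subsetD[OF A]] by simp
  qed
  have imgL: "(\<lambda>C. join_in L (e ` C)) ` A \<subseteq> L"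
    using cl_mem[OF c jc_img[OF jc ideal_sub[OF subsetD[OF A]]]] by blast
  have "join_in L (e ` join_in (ideals P U) A) = join_in L (e ` Gamma P U (\<Union>A))"
    using ideals_join[OF js A] by simp
  also have "\<dots> = join_in L (e ` \<Union>A)" using join_Gamma[OF jc U UA] .
  also have "\<dots> = join_in L ((\<lambda>C. join_in L (e ` C)) ` A)"
  proof (rule join_in_eq)
    let ?m = "join_in L ((\<lambda>C. join_in L (e ` C)) ` A)"
    show "is_lub_in L (e ` \<Union>A) ?m" unfolding is_lub_in_def
    proof (intro conjI ballI impI)
      show "?m \<in> L" using cl_mem[OF c imgL] .
      fix s assume "s \<in> e ` \<Union>A"
      then obtain C x where Cx: "C \<in> A" "x \<in> C" "s = e x" by auto
      have CP: "C \<subseteq> P" using ideal_sub[OF subsetD[OF A Cx(1)]] .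
      have "s \<le> join_in L (e ` C)" using cl_upper[OF c jc_img[OF jc CP]] Cx by auto
      also have "\<dots> \<le> ?m" using cl_upper[OF c imgL] Cx(1) by auto
      finally show "s \<le> ?m" .
    next
      fix y assume y: "y \<in> L" and ub: "\<forall>s\<in>e ` \<Union>A. s \<le> y"
      show "?m \<le> y"
      proof (rule cl_least[OF c imgL y])
        fix a assume "a \<in> (\<lambda>C. join_in L (e ` C)) ` A"
        then obtain C where C: "C \<in> A" "a = join_in L (e ` C)" by auto
        have CP: "C \<subseteq> P" using ideal_sub[OF subsetD[OF A C(1)]] .
        show "a \<le> y" using cl_least[OF c jc_img[OF jc CP] y] ub C by auto
      qed
    qed
  qed
  finally show "join_in L (e ` join_in (ideals P U) A) = join_in L ((\<lambda>C. join_in L (e ` C)) ` (A::'a set set))" .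
next
  have c: "complete_on L" using jc_complete[OF jc] .
  fix p assume p: "p \<in> P"
  show "join_in L (e ` eta P p) = e p"
  proof (rule join_in_eq)
    show "is_lub_in L (e ` eta P p) (e p)" unfolding is_lub_in_def
    proof (intro conjI ballI impI)
      show "e p \<in> L" using jc_mem[OF jc p] .
      fix s assume "s \<in> e ` eta P p"
      then obtain q where "q \<in> P" "q \<le> p" "s = e q" unfolding eta_def by auto
      then show "s \<le> e p" using jc_le[OF jc _ p] by auto
    next
      fix y assume "y \<in> L" "\<forall>s\<in>e ` eta P p. s \<le> y"
      then show "e p \<le> y" using eta_mem[OF p] by auto
    qed
  qed
qed



lemma meet_pres:
  assumes js: "join_spec P U" and jc: "join_completion P L e" and fr: "frame_on L"
    and a: "a \<in> ideals P U" and b: "b \<in> ideals P U"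
  shows "join_in L (e ` meet_in (ideals P U) {a, b}) = meet_in L {join_in L (e ` a), join_in L (e ` b)}"
proof -
  have c: "complete_on L" using jc_complete[OF jc] .
  have H: "\<forall>x\<in>L. \<forall>A. A \<subseteq> L \<longrightarrow> meet_in L {x, join_in L A} = join_in L ((\<lambda>y. meet_in L {x, y}) ` A)"
    using fr unfolding frame_on_def by (elim conjE)
  have aP: "a \<subseteq> P" and bP: "b \<subseteq> P" using a b ideal_sub by auto
  have abP: "a \<inter> b \<subseteq> P" using aP by auto
  let ?fa = "join_in L (e ` a)" and ?fb = "join_in L (e ` b)" and ?m = "join_in L (e ` (a \<inter> b))"
  have ea: "e ` a \<subseteq> L" and eb: "e ` b \<subseteq> L" and eab: "e ` (a \<inter> b) \<subseteq> L"
    using jc_img[OF jc] aP bP abP by auto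
  have fa: "?fa \<in> L" and fb: "?fb \<in> L" and m: "?m \<in> L" using cl_mem[OF c] ea eb eab by auto
  have key: "meet_in L {e d, e q} \<le> ?m" if d: "d \<in> b" and q: "q \<in> a" for d q
  proof -
    have dP: "d \<in> P" and qP: "q \<in> P" using d q aP bP by auto
    let ?z = "meet_in L {e d, e q}"
    have z: "?z \<in> L" using cl_meet_mem[OF c jc_mem[OF jc dP] jc_mem[OF jc qP]] .
    obtain T where T: "T \<subseteq> P" "?z = join_in L (e ` T)" using jc_dense[OF jc z] by auto
    have "T \<subseteq> a \<inter> b"
    proof
      fix t assume t: "t \<in> T"
      have tP: "t \<in> P" using t T(1) by auto
      have "e t \<le> ?z" using cl_upper[OF c jc_img[OF jc T(1)]] t T(2) by auto
      then have "e t \<le> e d" "e t \<le> e q"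
        using cl_meet_le1[OF c jc_mem[OF jc dP] jc_mem[OF jc qP]]
              cl_meet_le2[OF c jc_mem[OF jc dP] jc_mem[OF jc qP]] order.trans by blast+
      then have "t \<le> d" "t \<le> q" using jc_le[OF jc tP dP] jc_le[OF jc tP qP] by auto
      then show "t \<in> a \<inter> b" using ideal_down[OF a q tP] ideal_down[OF b d tP] by auto
    qed
    then have "e ` T \<subseteq> e ` (a \<inter> b)" by auto
    then show ?thesis using T(2) cl_mono[OF c _ eab] by simp
  qed
  have "meet_in L {?fa, ?fb} \<le> ?m"
  proof -
    have "meet_in L {?fa, ?fb} = join_in L ((\<lambda>y. meet_in L {?fa, y}) ` e ` b)"
      using H[rule_format, OF fa eb] .
    also have "\<dots> \<le> ?m"
    proof (rule cl_least[OF c _ m])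
      show "(\<lambda>y. meet_in L {?fa, y}) ` e ` b \<subseteq> L" using cl_meet_mem[OF c fa] eb by auto
      fix w assume "w \<in> (\<lambda>y. meet_in L {?fa, y}) ` e ` b"
      then obtain d where d: "d \<in> b" "w = meet_in L {?fa, e d}" by auto
      have dP: "d \<in> P" using d bP by auto
      have ed: "e d \<in> L" using jc_mem[OF jc dP] .
      have "w = meet_in L {e d, ?fa}" using d(2) by (simp add: insert_commute)
      also have "\<dots> = join_in L ((\<lambda>y. meet_in L {e d, y}) ` e ` a)"
        using H[rule_format, OF ed ea] .
      also have "\<dots> \<le> ?m"
      proof (rule cl_least[OF c _ m])
        show "(\<lambda>y. meet_in L {e d, y}) ` e ` a \<subseteq> L" using cl_meet_mem[OF c ed] ea by auto
        fix v assume "v \<in> (\<lambda>y. meet_in L {e d, y}) ` e ` a"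
        then obtain q where "q \<in> a" "v = meet_in L {e d, e q}" by auto
        then show "v \<le> ?m" using key[OF d(1)] by simp
      qed
      finally show "w \<le> ?m" .
    qed
    finally show ?thesis .
  qed
  moreover have "?m \<le> meet_in L {?fa, ?fb}"
  proof (rule cl_meet_greatest[OF c fa fb m])
    show "?m \<le> ?fa" using cl_mono[OF c _ ea] by (meson image_mono inf_le1)
    show "?m \<le> ?fb" using cl_mono[OF c _ eb] by (meson image_mono inf_le2)
  qed
  ultimately have "?m = meet_in L {?fa, ?fb}" by simp
  then show ?thesis using ideals_meet[OF a b] by simp
qed

lemma Gobj_iff:
  assumes fg: "frame_generating P U"
  shows "U \<subseteq> G_obj P L e \<longleftrightarrow> U \<subseteq> U_of P L e"
  using Vminus_sub[of P "U_of P L e"] Vminus_greatest[OF fg, of "U_of P L e"]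
  unfolding G_obj_def by blast

lemma adj_jc:
  assumes fg: "frame_generating P U" and jc: "join_completion P L e"
  shows "((\<exists>f. jc_arrow P (ideals P U) (eta P) L e f) \<longleftrightarrow> U \<subseteq> G_obj P L e)
          \<and> (\<forall>f g. jc_arrow P (ideals P U) (eta P) L e f \<and> jc_arrow P (ideals P U) (eta P) L e g
                 \<longrightarrow> (\<forall>x\<in>ideals P U. f x = g x))"
proof -
  have js: "join_spec P U" using fg unfolding frame_generating_def by simp
  show ?thesis
    using arrow_Uof[OF js] Uof_arrow[OF js jc] Gobj_iff[OF fg] arrow_unique[OF js]
    by metis
qed

lemma adj_frm:
  assumes fg: "frame_generating P U" and jc: "join_completion P L e" and fr: "frame_on L"
  shows "((\<exists>f. frm_arrow P (ideals P U) (eta P) L e f) \<longleftrightarrow> U \<subseteq> G_obj P L e)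
          \<and> (\<forall>f g. frm_arrow P (ideals P U) (eta P) L e f \<and> frm_arrow P (ideals P U) (eta P) L e g
                 \<longrightarrow> (\<forall>x\<in>ideals P U. f x = g x))"
proof -
  have js: "join_spec P U" using fg unfolding frame_generating_def by simp
  have 1: "U \<subseteq> G_obj P L e" if "frm_arrow P (ideals P U) (eta P) L e f" for f
    using that arrow_Uof[OF js] Gobj_iff[OF fg] unfolding frm_arrow_def by blast
  have 2: "frm_arrow P (ideals P U) (eta P) L e (\<lambda>C. join_in L (e ` C))" if "U \<subseteq> G_obj P L e"
    unfolding frm_arrow_def
    using that Uof_arrow[OF js jc] Gobj_iff[OF fg] meet_pres[OF js jc fr] by blast
  have 3: "\<forall>x\<in>ideals P U. f x = g x" if "frm_arrow P (ideals P U) (eta P) L e f" "frm_arrow P (ideals P U) (eta P) L e g" for f g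
    using that arrow_unique[OF js] unfolding frm_arrow_def by metis
  show ?thesis using 1 2 3 by blast
qed


theorem corollary5p14:
  fixes P :: "'a::order set"
  shows
    \<comment> \<open>F_P is well defined as a functor JF_P \<rightarrow> Frm_P (hence also JF^+_P \<rightarrow> JC_P)\<close>
    "(\<forall>U. frame_generating P U \<longrightarrow>
          join_completion P (ideals P U) (eta P) \<and> frame_on (ideals P U))
   \<and> (\<forall>U1 U2. frame_generating P U1 \<and> frame_generating P U2 \<and> U1 \<subseteq> U2 \<longrightarrow>
          (\<exists>f. frm_arrow P (ideals P U1) (eta P) (ideals P U2) (eta P) f))
    \<comment> \<open>G_P is well defined as a functor JC_P \<rightarrow> JF^+_P (hence G'_P as well)\<close>
   \<and> (\<forall>(L :: 'l::order set) e. join_completion P L e \<longrightarrow>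
          frame_generating P (G_obj P L e) \<and> maximal_spec P (G_obj P L e))
   \<and> (\<forall>(L1 :: 'l::order set) e1 (L2 :: 'm::order set) e2 f.
          join_completion P L1 e1 \<and> join_completion P L2 e2 \<and> jc_arrow P L1 e1 L2 e2 f \<longrightarrow>
          G_obj P L1 e1 \<subseteq> G_obj P L2 e2)
    \<comment> \<open>F_P \<circ> \<iota> \<turnstile> G_P : hom-sets JC_P(F U, e) correspond to JF^+_P(U, G e)\<close>
   \<and> (\<forall>U (L :: 'l::order set) e.
          frame_generating P U \<and> maximal_spec P U \<and> join_completion P L e \<longrightarrow>
          ((\<exists>f. jc_arrow P (ideals P U) (eta P) L e f) \<longleftrightarrow> U \<subseteq> G_obj P L e)
          \<and> (\<forall>f g. jc_arrow P (ideals P U) (eta P) L e f \<and> jc_arrow P (ideals P U) (eta P) L e g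
                 \<longrightarrow> (\<forall>x\<in>ideals P U. f x = g x)))
    \<comment> \<open>F_P \<turnstile> G'_P : hom-sets Frm_P(F U, e) correspond to JF_P(U, G' e)\<close>
   \<and> (\<forall>U (L :: 'l::order set) e.
          frame_generating P U \<and> join_completion P L e \<and> frame_on L \<longrightarrow>
          ((\<exists>f. frm_arrow P (ideals P U) (eta P) L e f) \<longleftrightarrow> U \<subseteq> G_obj P L e)
          \<and> (\<forall>f g. frm_arrow P (ideals P U) (eta P) L e f \<and> frm_arrow P (ideals P U) (eta P) L e g
                 \<longrightarrow> (\<forall>x\<in>ideals P U. f x = g x)))
    \<comment> \<open>F_P \<circ> \<iota> \<turnstile> G'_P : hom-sets Frm_P(F U, e) correspond to JF^+_P(U, G' e)\<close>
   \<and> (\<forall>U (L :: 'l::order set) e.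
          frame_generating P U \<and> maximal_spec P U \<and> join_completion P L e \<and> frame_on L \<longrightarrow>
          ((\<exists>f. frm_arrow P (ideals P U) (eta P) L e f) \<longleftrightarrow> U \<subseteq> G_obj P L e)
          \<and> (\<forall>f g. frm_arrow P (ideals P U) (eta P) L e f \<and> frm_arrow P (ideals P U) (eta P) L e g
                 \<longrightarrow> (\<forall>x\<in>ideals P U. f x = g x)))"
proof -
  have c1: "(\<forall>U. frame_generating P U \<longrightarrow>
          join_completion P (ideals P U) (eta P) \<and> frame_on (ideals P U))"
    by (intro allI impI, rule F_obj)
  have c2: "(\<forall>U1 U2. frame_generating P U1 \<and> frame_generating P U2 \<and> U1 \<subseteq> U2 \<longrightarrow>
          (\<exists>f. frm_arrow P (ideals P U1) (eta P) (ideals P U2) (eta P) f))"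
    by (intro allI impI, elim conjE, rule exI, rule F_arr, assumption+)
  have c3: "(\<forall>(L :: 'l::order set) e. join_completion P L e \<longrightarrow>
          frame_generating P (G_obj P L e) \<and> maximal_spec P (G_obj P L e))"
    by (intro allI impI, rule Gobj_props)
  have c4: "(\<forall>(L1 :: 'l::order set) e1 (L2 :: 'm::order set) e2 f.
          join_completion P L1 e1 \<and> join_completion P L2 e2 \<and> jc_arrow P L1 e1 L2 e2 f \<longrightarrow>
          G_obj P L1 e1 \<subseteq> G_obj P L2 e2)"
    unfolding G_obj_def by (intro allI impI, elim conjE, rule Vminus_mono, rule arrow_Uof_mono, assumption+)
  have c5: "(\<forall>U (L :: 'l::order set) e.
          frame_generating P U \<and> maximal_spec P U \<and> join_completion P L e \<longrightarrow>
          ((\<exists>f. jc_arrow P (ideals P U) (eta P) L e f) \<longleftrightarrow> U \<subseteq> G_obj P L e)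
          \<and> (\<forall>f g. jc_arrow P (ideals P U) (eta P) L e f \<and> jc_arrow P (ideals P U) (eta P) L e g
                 \<longrightarrow> (\<forall>x\<in>ideals P U. f x = g x)))"
    by (intro allI impI, elim conjE, rule adj_jc, assumption+)
  have c6: "(\<forall>U (L :: 'l::order set) e.
          frame_generating P U \<and> join_completion P L e \<and> frame_on L \<longrightarrow>
          ((\<exists>f. frm_arrow P (ideals P U) (eta P) L e f) \<longleftrightarrow> U \<subseteq> G_obj P L e)
          \<and> (\<forall>f g. frm_arrow P (ideals P U) (eta P) L e f \<and> frm_arrow P (ideals P U) (eta P) L e g
                 \<longrightarrow> (\<forall>x\<in>ideals P U. f x = g x)))"
    by (intro allI impI, elim conjE, rule adj_frm, assumption+)
  have c7: "(\<forall>U (L :: 'l::order set) e.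
          frame_generating P U \<and> maximal_spec P U \<and> join_completion P L e \<and> frame_on L \<longrightarrow>
          ((\<exists>f. frm_arrow P (ideals P U) (eta P) L e f) \<longleftrightarrow> U \<subseteq> G_obj P L e)
          \<and> (\<forall>f g. frm_arrow P (ideals P U) (eta P) L e f \<and> frm_arrow P (ideals P U) (eta P) L e g
                 \<longrightarrow> (\<forall>x\<in>ideals P U. f x = g x)))"
    by (intro allI impI, elim conjE, rule adj_frm, assumption+)
  show ?thesis by (rule conjI[OF c1 conjI[OF c2 conjI[OF c3 conjI[OF c4 conjI[OF c5 conjI[OF c6 c7]]]]]])
qed

end
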